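(* Let $W$ be a neat, upward-restricted layered wheel with rooted tree $T$. Then every class $\mathcal F$ of finite induced subgraphs of $W$ that satisfies the bounded-branch property in $W$ has bounded treewidth (i.e., there is a constant $c$ with $\operatorname{tw}(G')\le c$ for all $G'\in\mathcal F$).
   Context: A layered wheel is a countably infinite graph $W$ on the same vertex set as a countably infinite, locally finite (every node has finite degree) rooted tree $T$ embedded in the plane, such that: (1) for every natural number $n$, the set $L_n$ of nodes at distance $n$ from the root of $T$ (the $n$-th layer) induces in $W$ a finite path which visits the nodes of $L_n$ in the left-to-right order given by the planar embedding of $T$; the edges of $W$ with both endpoints in a common layer are the layer edges, and their set is denoted $E_L$; (2) every edge of $W$ not in $E_L$ joins two nodes one of which is an ancestor of the other in $T$; (3) there is a finite bound on the number of vertices of any path in $T$ consisting only of nodes of degree $2$ in $T$. A node is considered its own ancestor and descendant. $W$ is neat if $T$ has no leaf. $W$ is upward-restricted if there is an integer $t$ such that for every node $v$ of $T$ there is a set $X_v$ of at most $t$ ancestors of $v$ such that, in $W - E_L$, every edge with exactly one endpoint among the descendants of $v$ has its other endpoint in $X_v$. A downward path in $T$ starting at $v$ is a maximal (possibly infinite) path starting at $v$ that iteratively moves from the current node to one of its children as long as the current node is not a leaf. A family $\mathcal F$ of induced subgraphs of $W$ satisfies the bounded-branch property (in $W$) if there is an integer $h$ such that for every $G'\in\mathcal F$ and every $v\in V(T)$ (not necessarily in $V(G')$), there is a downward path in $T$ starting at $v$ containing at most $h$ vertices of $G'$. *)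

theory Defs
  imports Main "HOL-Library.Countable_Set"
begin

definition rooted_tree :: "'v set \<Rightarrow> 'v \<Rightarrow> ('v \<Rightarrow> 'v) \<Rightarrow> bool" where
  "rooted_tree V r par \<longleftrightarrow> r \<in> V \<and> par r = r \<and> (\<forall>v\<in>V. par v \<in> V)
     \<and> (\<forall>v\<in>V. \<exists>n. (par ^^ n) v = r)"

definition anc :: "('v \<Rightarrow> 'v) \<Rightarrow> 'v \<Rightarrow> 'v \<Rightarrow> bool" where
  "anc par u v \<longleftrightarrow> (\<exists>n. (par ^^ n) v = u)"

definition depth :: "('v \<Rightarrow> 'v) \<Rightarrow> 'v \<Rightarrow> 'v \<Rightarrow> nat" where
  "depth par r v = (LEAST n. (par ^^ n) v = r)"

definition layer :: "'v set \<Rightarrow> 'v \<Rightarrow> ('v \<Rightarrow> 'v) \<Rightarrow> nat \<Rightarrow> 'v set" where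
  "layer V r par n = {v \<in> V. depth par r v = n}"

definition children :: "'v set \<Rightarrow> 'v \<Rightarrow> ('v \<Rightarrow> 'v) \<Rightarrow> 'v \<Rightarrow> 'v set" where
  "children V r par v = {c \<in> V. c \<noteq> r \<and> par c = v}"

definition tree_adj :: "'v set \<Rightarrow> ('v \<Rightarrow> 'v) \<Rightarrow> 'v \<Rightarrow> 'v \<Rightarrow> bool" where
  "tree_adj V par u v \<longleftrightarrow> u \<in> V \<and> v \<in> V \<and> u \<noteq> v \<and> (par u = v \<or> par v = u)"

definition tree_degree :: "'v set \<Rightarrow> ('v \<Rightarrow> 'v) \<Rightarrow> 'v \<Rightarrow> nat" where
  "tree_degree V par v = card {u. tree_adj V par v u}"

definition tree_path :: "'v set \<Rightarrow> ('v \<Rightarrow> 'v) \<Rightarrow> 'v list \<Rightarrow> bool" where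
  "tree_path V par xs \<longleftrightarrow> distinct xs \<and> set xs \<subseteq> V
     \<and> (\<forall>i. Suc i < length xs \<longrightarrow> tree_adj V par (xs ! i) (xs ! Suc i))"

text \<open>Planar embedding of the rooted tree, recorded via the induced left-to-right
  order of each layer: pos gives the position within the layer; orders of consecutive
  layers are compatible (no crossing of tree edges).\<close>
definition planar_layer_order :: "'v set \<Rightarrow> 'v \<Rightarrow> ('v \<Rightarrow> 'v) \<Rightarrow> ('v \<Rightarrow> nat) \<Rightarrow> bool" where
  "planar_layer_order V r par pos \<longleftrightarrow>
     (\<forall>n. inj_on pos (layer V r par n))
   \<and> (\<forall>u\<in>V. \<forall>w\<in>V. depth par r u = depth par r w \<and> pos u < pos w
        \<longrightarrow> pos (par u) \<le> pos (par w))"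

definition layered_wheel ::
  "'v set \<Rightarrow> 'v \<Rightarrow> ('v \<Rightarrow> 'v) \<Rightarrow> ('v \<Rightarrow> nat) \<Rightarrow> ('v \<Rightarrow> 'v \<Rightarrow> bool) \<Rightarrow> bool" where
  "layered_wheel V r par pos E \<longleftrightarrow>
     countable V \<and> infinite V \<and> rooted_tree V r par
   \<and> (\<forall>v\<in>V. finite (children V r par v))
   \<and> planar_layer_order V r par pos
   \<and> (\<forall>u w. E u w \<longrightarrow> u \<in> V \<and> w \<in> V \<and> u \<noteq> w \<and> E w u)
   \<comment> \<open>(1) each layer is finite and induces the path in left-to-right order\<close>
   \<and> (\<forall>n. finite (layer V r par n))
   \<and> (\<forall>n. \<forall>u\<in>layer V r par n. \<forall>w\<in>layer V r par n.
        E u w \<longleftrightarrow>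
          ((pos u < pos w \<and> \<not> (\<exists>x\<in>layer V r par n. pos u < pos x \<and> pos x < pos w))
         \<or> (pos w < pos u \<and> \<not> (\<exists>x\<in>layer V r par n. pos w < pos x \<and> pos x < pos u))))
   \<comment> \<open>(2) non-layer edges join ancestor/descendant pairs\<close>
   \<and> (\<forall>u w. E u w \<and> depth par r u \<noteq> depth par r w \<longrightarrow> anc par u w \<or> anc par w u)
   \<comment> \<open>(3) bounded length of paths of degree-2 nodes in T\<close>
   \<and> (\<exists>k. \<forall>xs. tree_path V par xs \<and> (\<forall>x\<in>set xs. tree_degree V par x = 2)
        \<longrightarrow> length xs \<le> k)"

definition neat :: "'v set \<Rightarrow> 'v \<Rightarrow> ('v \<Rightarrow> 'v) \<Rightarrow> bool" where
  "neat V r par \<longleftrightarrow> (\<forall>v\<in>V. children V r par v \<noteq> {})"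

definition upward_restricted ::
  "'v set \<Rightarrow> 'v \<Rightarrow> ('v \<Rightarrow> 'v) \<Rightarrow> ('v \<Rightarrow> 'v \<Rightarrow> bool) \<Rightarrow> bool" where
  "upward_restricted V r par E \<longleftrightarrow>
     (\<exists>t::nat. \<forall>v\<in>V. \<exists>X. finite X \<and> card X \<le> t \<and> (\<forall>x\<in>X. anc par x v)
        \<and> (\<forall>a b. E a b \<and> depth par r a \<noteq> depth par r b \<and> anc par v a \<and> \<not> anc par v b
               \<longrightarrow> b \<in> X))"

text \<open>Downward path from v: maximal; moves to a child while there is one
  (stays put once a leaf is reached, so its vertex set is the range).\<close>
definition downward_path :: "'v set \<Rightarrow> 'v \<Rightarrow> ('v \<Rightarrow> 'v) \<Rightarrow> 'v \<Rightarrow> (nat \<Rightarrow> 'v) \<Rightarrow> bool" where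
  "downward_path V r par v f \<longleftrightarrow> f 0 = v \<and>
     (\<forall>i. (children V r par (f i) \<noteq> {} \<longrightarrow> f (Suc i) \<in> children V r par (f i))
        \<and> (children V r par (f i) = {} \<longrightarrow> f (Suc i) = f i))"

text \<open>Induced subgraphs are identified with their vertex sets.\<close>
definition bounded_branch :: "'v set \<Rightarrow> 'v \<Rightarrow> ('v \<Rightarrow> 'v) \<Rightarrow> 'v set set \<Rightarrow> bool" where
  "bounded_branch V r par F \<longleftrightarrow>
     (\<exists>h::nat. \<forall>S\<in>F. \<forall>v\<in>V. \<exists>f. downward_path V r par v f
        \<and> finite (range f \<inter> S) \<and> card (range f \<inter> S) \<le> h)"

definition tree_decomp ::
  "'v set \<Rightarrow> ('v \<Rightarrow> 'v \<Rightarrow> bool) \<Rightarrow> nat set \<Rightarrow> (nat \<Rightarrow> nat) \<Rightarrow> nat \<Rightarrow> (nat \<Rightarrow> 'v set) \<Rightarrow> bool" where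
  "tree_decomp S E I p i0 B \<longleftrightarrow>
     finite I \<and> i0 \<in> I \<and> p i0 = i0 \<and> (\<forall>i\<in>I. p i \<in> I) \<and> (\<forall>i\<in>I. \<exists>n. (p ^^ n) i = i0)
   \<and> (\<forall>i\<in>I. B i \<subseteq> S)
   \<and> (\<forall>v\<in>S. \<exists>i\<in>I. v \<in> B i)
   \<and> (\<forall>u\<in>S. \<forall>v\<in>S. E u v \<longrightarrow> (\<exists>i\<in>I. u \<in> B i \<and> v \<in> B i))
   \<and> (\<forall>v\<in>S. \<forall>i\<in>I. \<forall>j\<in>I. v \<in> B i \<and> v \<in> B j \<longrightarrow>
        (\<lambda>a b. a \<in> I \<and> b \<in> I \<and> v \<in> B a \<and> v \<in> B b \<and> (p a = b \<or> p b = a))\<^sup>*\<^sup>* i j)"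

definition treewidth :: "'v set \<Rightarrow> ('v \<Rightarrow> 'v \<Rightarrow> bool) \<Rightarrow> nat" where
  "treewidth S E = (LEAST k. \<exists>I p i0 B. tree_decomp S E I p i0 B
                                  \<and> (\<forall>i\<in>I. card (B i) \<le> k + 1))"

end

theory Submission
  imports Defs
begin

lemma td_single:
  "tree_decomp A E {0} (\<lambda>_. 0) 0 (\<lambda>_. A)"
  unfolding tree_decomp_def by (auto intro: exI[of _ 0])

lemma rtranclp_sym_aux:
  assumes "\<And>a b. R a b \<Longrightarrow> R b a" and "R\<^sup>*\<^sup>* a b" shows "R\<^sup>*\<^sup>* b a"
  using assms(2)
proof (induction rule: rtranclp_induct)
  case base then show ?case by simp
next
  case (step y z)
  then show ?case using assms(1) by (meson converse_rtranclp_into_rtranclp)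
qed

lemma td_glue:
  assumes D1: "tree_decomp A1 E I1 p1 a1 B1" and D2: "tree_decomp A2 E I2 p2 a2 B2"
    and sh: "A1 \<inter> A2 \<subseteq> Y" and r1: "A1 \<inter> Y \<subseteq> B1 a1" and r2: "A2 \<inter> Y \<subseteq> B2 a2"
    and AY: "A = A1 \<union> A2 \<union> Y"
    and ed: "\<forall>u\<in>A. \<forall>v\<in>A. E u v \<longrightarrow> (u\<in>A1 \<and> v\<in>A1) \<or> (u\<in>A2 \<and> v\<in>A2) \<or> (u\<in>Y \<and> v\<in>Y)"
  shows "\<exists>I p i0 B. tree_decomp A E I p i0 B \<and> B i0 = Y
     \<and> (\<forall>i\<in>I. B i = Y \<or> (\<exists>j\<in>I1. B i = B1 j) \<or> (\<exists>j\<in>I2. B i = B2 j))"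
proof -
  define I where "I = insert (0::nat) ((\<lambda>i. Suc (2*i)) ` I1 \<union> (\<lambda>i. Suc (Suc (2*i))) ` I2)"
  define p where "p = (\<lambda>n::nat. if n = 0 then 0 else if odd n then
      (if (n-1) div 2 = a1 then 0 else Suc (2*(p1 ((n-1) div 2))))
      else (if (n-2) div 2 = a2 then 0 else Suc (Suc (2*(p2 ((n-2) div 2))))))"
  define B where "B = (\<lambda>n::nat. if n = 0 then Y else if odd n then B1 ((n-1) div 2) else B2 ((n-2) div 2))"
  have p0: "p 0 = 0" by (simp add: p_def)
  have p1s: "p (Suc (2*i)) = (if i = a1 then 0 else Suc (2*(p1 i)))" for i by (simp add: p_def)
  have p2s: "p (Suc (Suc (2*i))) = (if i = a2 then 0 else Suc (Suc (2*(p2 i))))" for i by (simp add: p_def)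
  have B0: "B 0 = Y" by (simp add: B_def)
  have B1s: "B (Suc (2*i)) = B1 i" for i by (simp add: B_def)
  have B2s: "B (Suc (Suc (2*i))) = B2 i" for i by (simp add: B_def)
  note d1 = D1[unfolded tree_decomp_def] and d2 = D2[unfolded tree_decomp_def]
  have Icases: "n = 0 \<or> (\<exists>i\<in>I1. n = Suc (2*i)) \<or> (\<exists>i\<in>I2. n = Suc (Suc (2*i)))" if "n \<in> I" for n
    using that unfolding I_def by auto
  have fin: "finite I" unfolding I_def using d1 d2 by auto
  have pI: "\<forall>i\<in>I. p i \<in> I"
  proof
    fix n assume "n \<in> I"
    then consider "n = 0" | i where "i \<in> I1" "n = Suc (2*i)" | i where "i \<in> I2" "n = Suc (Suc (2*i))"
      using Icases by blast
    then show "p n \<in> I"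
    proof cases
      case 1 then show ?thesis by (simp add: p0 I_def)
    next
      case 2 then show ?thesis using d1 by (auto simp: p1s I_def)
    next
      case 3 then show ?thesis using d2 by (auto simp: p2s I_def)
    qed
  qed
  have reach1: "(p1 ^^ n) i = a1 \<Longrightarrow> i \<in> I1 \<Longrightarrow> (p ^^ Suc n) (Suc (2*i)) = 0" for n i
  proof (induction n arbitrary: i)
    case 0 then show ?case by (simp add: p1s)
  next
    case (Suc n)
    show ?case
    proof (cases "i = a1")
      case True
      have "(p ^^ Suc (Suc n)) (Suc (2*i)) = (p ^^ Suc n) (p (Suc (2*i)))" by (simp only: funpow_Suc_right o_def)
      also have "\<dots> = (p ^^ Suc n) 0" using True by (simp add: p1s)
      also have "\<dots> = 0" by (induction n) (simp_all add: p0)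
      finally show ?thesis .
    next
      case False
      have "(p1 ^^ n) (p1 i) = a1" using Suc.prems by (metis comp_apply funpow_Suc_right)
      moreover have "p1 i \<in> I1" using d1 Suc.prems by auto
      ultimately have pr: "(p ^^ Suc n) (Suc (2*(p1 i))) = 0" using Suc.IH by blast
      have "(p ^^ Suc (Suc n)) (Suc (2*i)) = (p ^^ Suc n) (p (Suc (2*i)))" by (simp only: funpow_Suc_right o_def)
      also have "\<dots> = (p ^^ Suc n) (Suc (2*(p1 i)))" by (simp only: p1s if_not_P[OF False])
      finally show ?thesis using pr by simp
    qed
  qed
  have reach2: "(p2 ^^ n) i = a2 \<Longrightarrow> i \<in> I2 \<Longrightarrow> (p ^^ Suc n) (Suc (Suc (2*i))) = 0" for n i
  proof (induction n arbitrary: i)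
    case 0 then show ?case by (simp add: p2s)
  next
    case (Suc n)
    show ?case
    proof (cases "i = a2")
      case True
      have "(p ^^ Suc (Suc n)) (Suc (Suc (2*i))) = (p ^^ Suc n) (p (Suc (Suc (2*i))))" by (simp only: funpow_Suc_right o_def)
      also have "\<dots> = (p ^^ Suc n) 0" using True by (simp add: p2s)
      also have "\<dots> = 0" by (induction n) (simp_all add: p0)
      finally show ?thesis .
    next
      case False
      have "(p2 ^^ n) (p2 i) = a2" using Suc.prems by (metis comp_apply funpow_Suc_right)
      moreover have "p2 i \<in> I2" using d2 Suc.prems by auto
      ultimately have pr: "(p ^^ Suc n) (Suc (Suc (2*(p2 i)))) = 0" using Suc.IH by blast
      have "(p ^^ Suc (Suc n)) (Suc (Suc (2*i))) = (p ^^ Suc n) (p (Suc (Suc (2*i))))" by (simp only: funpow_Suc_right o_def)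
      also have "\<dots> = (p ^^ Suc n) (Suc (Suc (2*(p2 i))))" by (simp only: p2s if_not_P[OF False])
      finally show ?thesis using pr by simp
    qed
  qed
  have reach: "\<forall>i\<in>I. \<exists>n. (p ^^ n) i = 0"
  proof
    fix n assume "n \<in> I"
    then consider "n = 0" | i where "i \<in> I1" "n = Suc (2*i)" | i where "i \<in> I2" "n = Suc (Suc (2*i))"
      using Icases by blast
    then show "\<exists>k. (p ^^ k) n = 0"
    proof cases
      case 1 then show ?thesis by (intro exI[of _ 0]) simp
    next
      case 2 then obtain k where "(p1 ^^ k) i = a1" using d1 by blast
      then show ?thesis using reach1 2 by blast
    next
      case 3 then obtain k where "(p2 ^^ k) i = a2" using d2 by blast
      then show ?thesis using reach2 3 by blast
    qed
  qed
  have Bsub: "\<forall>i\<in>I. B i \<subseteq> A"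
  proof
    fix n assume "n \<in> I"
    then consider "n = 0" | i where "i \<in> I1" "n = Suc (2*i)" | i where "i \<in> I2" "n = Suc (Suc (2*i))"
      using Icases by blast
    then show "B n \<subseteq> A"
    proof cases
      case 1 then show ?thesis using AY by (simp add: B0)
    next
      case 2 then show ?thesis using d1 AY by (auto simp: B1s)
    next
      case 3 then show ?thesis using d2 AY by (auto simp: B2s)
    qed
  qed
  have cover: "\<forall>v\<in>A. \<exists>i\<in>I. v \<in> B i"
  proof
    fix v assume "v \<in> A"
    then consider "v \<in> A1" | "v \<in> A2" | "v \<in> Y" using AY by blast
    then show "\<exists>i\<in>I. v \<in> B i"
    proof cases
      case 1 then obtain i where "i \<in> I1" "v \<in> B1 i" using d1 by blast
      then show ?thesis by (intro bexI[of _ "Suc (2*i)"]) (auto simp: B1s I_def)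
    next
      case 2 then obtain i where "i \<in> I2" "v \<in> B2 i" using d2 by blast
      then show ?thesis by (intro bexI[of _ "Suc (Suc (2*i))"]) (auto simp: B2s I_def)
    next
      case 3 then show ?thesis by (intro bexI[of _ 0]) (auto simp: B0 I_def)
    qed
  qed
  have edges: "\<forall>u\<in>A. \<forall>v\<in>A. E u v \<longrightarrow> (\<exists>i\<in>I. u \<in> B i \<and> v \<in> B i)"
  proof (intro ballI impI)
    fix u v assume "u \<in> A" "v \<in> A" "E u v"
    then consider "u\<in>A1 \<and> v\<in>A1" | "u\<in>A2 \<and> v\<in>A2" | "u\<in>Y \<and> v\<in>Y" using ed by blast
    then show "\<exists>i\<in>I. u \<in> B i \<and> v \<in> B i"
    proof cases
      case 1 then obtain i where "i \<in> I1" "u \<in> B1 i" "v \<in> B1 i" using d1 \<open>E u v\<close> by blast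
      then show ?thesis by (intro bexI[of _ "Suc (2*i)"]) (auto simp: B1s I_def)
    next
      case 2 then obtain i where "i \<in> I2" "u \<in> B2 i" "v \<in> B2 i" using d2 \<open>E u v\<close> by blast
      then show ?thesis by (intro bexI[of _ "Suc (Suc (2*i))"]) (auto simp: B2s I_def)
    next
      case 3 then show ?thesis by (intro bexI[of _ 0]) (auto simp: B0 I_def)
    qed
  qed
  have conn: "\<forall>v\<in>A. \<forall>i\<in>I. \<forall>j\<in>I. v \<in> B i \<and> v \<in> B j \<longrightarrow>
        (\<lambda>a b. a \<in> I \<and> b \<in> I \<and> v \<in> B a \<and> v \<in> B b \<and> (p a = b \<or> p b = a))\<^sup>*\<^sup>* i j"
  proof (intro ballI impI)
    fix v i j assume v: "v \<in> A" and ij: "i \<in> I" "j \<in> I" and vij: "v \<in> B i \<and> v \<in> B j"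
    define R where "R = (\<lambda>a b. a \<in> I \<and> b \<in> I \<and> v \<in> B a \<and> v \<in> B b \<and> (p a = b \<or> p b = a))"
    define R1 where "R1 = (\<lambda>a b. a \<in> I1 \<and> b \<in> I1 \<and> v \<in> B1 a \<and> v \<in> B1 b \<and> (p1 a = b \<or> p1 b = a))"
    define R2 where "R2 = (\<lambda>a b. a \<in> I2 \<and> b \<in> I2 \<and> v \<in> B2 a \<and> v \<in> B2 b \<and> (p2 a = b \<or> p2 b = a))"
    have Rsym: "R a b \<Longrightarrow> R b a" for a b unfolding R_def by auto
    have lift1: "R1\<^sup>*\<^sup>* a b \<Longrightarrow> R\<^sup>*\<^sup>* (Suc (2*a)) (Suc (2*b))" for a b
    proof (induction rule: rtranclp_induct)
      case base then show ?case by simp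
    next
      case (step y z)
      have "y = z \<or> R (Suc (2*y)) (Suc (2*z))"
      proof (cases "y = z")
        case False
        have "p1 y = z \<or> p1 z = y" "y \<in> I1" "z \<in> I1" "v \<in> B1 y" "v \<in> B1 z"
          using step(2) unfolding R1_def by auto
        moreover have "p1 a1 = a1" using d1 by blast
        ultimately show ?thesis using False unfolding R_def by (auto simp: p1s B1s I_def)
      qed simp
      then show ?case using step(3) by (metis rtranclp.rtrancl_into_rtrancl)
    qed
    have lift2: "R2\<^sup>*\<^sup>* a b \<Longrightarrow> R\<^sup>*\<^sup>* (Suc (Suc (2*a))) (Suc (Suc (2*b)))" for a b
    proof (induction rule: rtranclp_induct)
      case base then show ?case by simp
    next
      case (step y z)
      have "y = z \<or> R (Suc (Suc (2*y))) (Suc (Suc (2*z)))"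
      proof (cases "y = z")
        case False
        have "p2 y = z \<or> p2 z = y" "y \<in> I2" "z \<in> I2" "v \<in> B2 y" "v \<in> B2 z"
          using step(2) unfolding R2_def by auto
        moreover have "p2 a2 = a2" using d2 by blast
        ultimately show ?thesis using False unfolding R_def by (auto simp: p2s B2s I_def)
      qed simp
      then show ?case using step(3) by (metis rtranclp.rtrancl_into_rtrancl)
    qed
    have toroot: "R\<^sup>*\<^sup>* a 0" if aI: "a \<in> I" and vB: "v \<in> B a" and vY: "v \<in> Y" for a
    proof -
      consider "a = 0" | k where "k \<in> I1" "a = Suc (2*k)" | k where "k \<in> I2" "a = Suc (Suc (2*k))"
        using Icases[OF aI] by blast
      then show ?thesis
      proof cases
        case 1 then show ?thesis by simp
      next
        case 2
        have vk: "v \<in> B1 k" using vB 2 by (simp add: B1s)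
        have "v \<in> A1" using vk d1 2 by blast
        then have va: "v \<in> B1 a1" using r1 vY by blast
        have "R1\<^sup>*\<^sup>* k a1" using d1 2 vk va unfolding R1_def by blast
        then have "R\<^sup>*\<^sup>* a (Suc (2*a1))" using lift1 2 by simp
        moreover have "R (Suc (2*a1)) 0" unfolding R_def using va vY d1
          by (auto simp: p1s B1s B0 I_def)
        ultimately show ?thesis by (meson rtranclp.rtrancl_into_rtrancl)
      next
        case 3
        have vk: "v \<in> B2 k" using vB 3 by (simp add: B2s)
        have "v \<in> A2" using vk d2 3 by blast
        then have va: "v \<in> B2 a2" using r2 vY by blast
        have "R2\<^sup>*\<^sup>* k a2" using d2 3 vk va unfolding R2_def by blast
        then have "R\<^sup>*\<^sup>* a (Suc (Suc (2*a2)))" using lift2 3 by simp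
        moreover have "R (Suc (Suc (2*a2))) 0" unfolding R_def using va vY d2
          by (auto simp: p2s B2s B0 I_def)
        ultimately show ?thesis by (meson rtranclp.rtrancl_into_rtrancl)
      qed
    qed
    show "R\<^sup>*\<^sup>* i j" unfolding R_def[symmetric]
    proof (cases "v \<in> Y")
      case True
      have "R\<^sup>*\<^sup>* i 0" "R\<^sup>*\<^sup>* j 0" using toroot ij vij True by auto
      moreover have "R\<^sup>*\<^sup>* 0 j" using rtranclp_sym_aux[of R, OF Rsym] \<open>R\<^sup>*\<^sup>* j 0\<close> by blast
      ultimately show ?thesis by (meson rtranclp_trans)
    next
      case nY: False
      then have i0: "i \<noteq> 0" "j \<noteq> 0" using vij B0 by metis+
      consider k where "k \<in> I1" "i = Suc (2*k)" | k where "k \<in> I2" "i = Suc (Suc (2*k))"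
        using Icases[OF ij(1)] i0 by blast
      then show ?thesis
      proof cases
        case 1
        have vk: "v \<in> B1 k" using vij 1 by (simp add: B1s)
        then have "v \<in> A1" using d1 1 by blast
        then have "v \<notin> A2" using sh nY by blast
        have "\<not> (\<exists>m\<in>I2. j = Suc (Suc (2*m)))"
        proof
          assume "\<exists>m\<in>I2. j = Suc (Suc (2*m))"
          then obtain m where "m \<in> I2" "j = Suc (Suc (2*m))" by blast
          then have "v \<in> B2 m" using vij B2s by simp
          then show False using d2 \<open>m \<in> I2\<close> \<open>v \<notin> A2\<close> by blast
        qed
        then obtain l where l: "l \<in> I1" "j = Suc (2*l)"
          using Icases[OF ij(2)] i0 by blast
        have "v \<in> B1 l" using vij l by (simp add: B1s)
        then have "R1\<^sup>*\<^sup>* k l" using d1 1 l vk \<open>v \<in> A1\<close> unfolding R1_def by blast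
        then show ?thesis using lift1 1 l by simp
      next
        case 2
        have vk: "v \<in> B2 k" using vij 2 by (simp add: B2s)
        then have "v \<in> A2" using d2 2 by blast
        then have "v \<notin> A1" using sh nY by blast
        have "\<not> (\<exists>m\<in>I1. j = Suc (2*m))"
        proof
          assume "\<exists>m\<in>I1. j = Suc (2*m)"
          then obtain m where "m \<in> I1" "j = Suc (2*m)" by blast
          then have "v \<in> B1 m" using vij B1s by simp
          then show False using d1 \<open>m \<in> I1\<close> \<open>v \<notin> A1\<close> by blast
        qed
        then obtain l where l: "l \<in> I2" "j = Suc (Suc (2*l))"
          using Icases[OF ij(2)] i0 by blast
        have "v \<in> B2 l" using vij l by (simp add: B2s)
        then have "R2\<^sup>*\<^sup>* k l" using d2 2 l vk \<open>v \<in> A2\<close> unfolding R2_def by blast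
        then show ?thesis using lift2 2 l by simp
      qed
    qed
  qed
  have "tree_decomp A E I p 0 B"
    unfolding tree_decomp_def using fin pI reach Bsub cover edges conn p0
    by (simp add: I_def)
  moreover have "\<forall>i\<in>I. B i = Y \<or> (\<exists>j\<in>I1. B i = B1 j) \<or> (\<exists>j\<in>I2. B i = B2 j)"
    unfolding I_def by (auto simp: B0 B1s B2s)
  ultimately show ?thesis using B0 by blast
qed

locale LWS =
  fixes V :: "'v set" and r :: 'v and par :: "'v \<Rightarrow> 'v" and pos :: "'v \<Rightarrow> nat"
    and E :: "'v \<Rightarrow> 'v \<Rightarrow> bool" and S :: "'v set" and h :: nat and t :: nat and N :: nat
  assumes rt: "rooted_tree V r par"
    and pl: "planar_layer_order V r par pos"
    and Esym: "\<forall>u w. E u w \<longrightarrow> u \<in> V \<and> w \<in> V \<and> u \<noteq> w \<and> E w u"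
    and Elayer: "\<forall>n. \<forall>u\<in>layer V r par n. \<forall>w\<in>layer V r par n.
        E u w \<longleftrightarrow>
          ((pos u < pos w \<and> \<not> (\<exists>x\<in>layer V r par n. pos u < pos x \<and> pos x < pos w))
         \<or> (pos w < pos u \<and> \<not> (\<exists>x\<in>layer V r par n. pos w < pos x \<and> pos x < pos u)))"
    and Eanc: "\<forall>u w. E u w \<and> depth par r u \<noteq> depth par r w \<longrightarrow> anc par u w \<or> anc par w u"
    and finlayer: "\<forall>n. finite (layer V r par n)"
    and neat: "neat V r par"
    and upw: "\<forall>v\<in>V. \<exists>X. finite X \<and> card X \<le> t \<and> (\<forall>x\<in>X. anc par x v)
        \<and> (\<forall>a b. E a b \<and> depth par r a \<noteq> depth par r b \<and> anc par v a \<and> \<not> anc par v b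
               \<longrightarrow> b \<in> X)"
    and Sfin: "finite S" and SV: "S \<subseteq> V"
    and bb: "\<forall>v\<in>V. \<exists>f. downward_path V r par v f \<and> finite (range f \<inter> S) \<and> card (range f \<inter> S) \<le> h"
    and Ndep: "\<forall>s\<in>S. depth par r s < N"
begin

abbreviation dp where "dp x \<equiv> depth par r x"

lemma rV: "r \<in> V" and parr: "par r = r" and parV: "v \<in> V \<Longrightarrow> par v \<in> V"
  using rt unfolding rooted_tree_def by auto

lemma dp_path: "v \<in> V \<Longrightarrow> (par ^^ dp v) v = r"
  using rt unfolding rooted_tree_def depth_def by (metis (mono_tags, lifting) LeastI_ex)

lemma dp_le: "(par ^^ n) v = r \<Longrightarrow> dp v \<le> n"
  unfolding depth_def by (rule Least_le)

lemma funpow_V: "v \<in> V \<Longrightarrow> (par ^^ n) v \<in> V"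
  by (induction n) (auto simp: parV)

lemma dp_r: "dp r = 0"
  using dp_le[of 0 r] by simp

lemma dp0: "v \<in> V \<Longrightarrow> dp v = 0 \<Longrightarrow> v = r"
  using dp_path[of v] by simp

lemma dp_par: assumes "v \<in> V" "v \<noteq> r" shows "dp (par v) = dp v - 1" "dp v \<ge> 1"
proof -
  have d: "dp v \<noteq> 0" using dp0 assms by blast
  then obtain k where k: "dp v = Suc k" by (cases "dp v") auto
  have "(par ^^ k) (par v) = r" using dp_path[OF assms(1)] k by (simp add: funpow_swap1)
  then have a: "dp (par v) \<le> k" by (rule dp_le)
  have "(par ^^ Suc (dp (par v))) v = r" using dp_path[OF parV[OF assms(1)]] by (simp add: funpow_swap1)
  then have "dp v \<le> Suc (dp (par v))" by (rule dp_le)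
  then show "dp (par v) = dp v - 1" using a k by simp
  show "dp v \<ge> 1" using d by simp
qed

lemma dp_funpow: "v \<in> V \<Longrightarrow> dp ((par ^^ j) v) = dp v - j"
proof (induction j)
  case 0 then show ?case by simp
next
  case (Suc j)
  let ?x = "(par ^^ j) v"
  have xV: "?x \<in> V" using funpow_V Suc.prems by blast
  show ?case
  proof (cases "?x = r")
    case True
    then show ?thesis using Suc dp_r parr by simp
  next
    case False
    then show ?thesis using dp_par[OF xV False] Suc by simp
  qed
qed

lemma anc_char: assumes "v \<in> V" "anc par u v"
  shows "dp u \<le> dp v" "u = (par ^^ (dp v - dp u)) v"
proof -
  obtain n where n: "(par ^^ n) v = u" using assms(2) unfolding anc_def by blast
  have du: "dp u = dp v - n" using dp_funpow[OF assms(1), of n] n by simp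
  show "dp u \<le> dp v" using du by simp
  show "u = (par ^^ (dp v - dp u)) v"
  proof (cases "n \<le> dp v")
    case True then show ?thesis using du n by simp
  next
    case False
    then have "dp u = 0" using du by simp
    moreover have "u \<in> V" using n funpow_V assms(1) by blast
    ultimately have "u = r" using dp0 by blast
    then show ?thesis using dp_path[OF assms(1)] \<open>dp u = 0\<close> by simp
  qed
qed

lemma inj_layer: "x \<in> V \<Longrightarrow> y \<in> V \<Longrightarrow> dp x = dp y \<Longrightarrow> pos x = pos y \<Longrightarrow> x = y"
  using pl unfolding planar_layer_order_def inj_on_def layer_def by blast

lemma planar_step: "x \<in> V \<Longrightarrow> y \<in> V \<Longrightarrow> dp x = dp y \<Longrightarrow> pos x < pos y \<Longrightarrow> pos (par x) \<le> pos (par y)"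
  using pl unfolding planar_layer_order_def by blast

lemma planar_funpow_aux:
  assumes "x \<in> V" "y \<in> V" "dp x = dp y" "pos x < pos y"
  shows "pos ((par ^^ j) x) < pos ((par ^^ j) y) \<or> (par ^^ j) x = (par ^^ j) y"
proof (induction j)
  case 0 then show ?case using assms by simp
next
  case (Suc j)
  let ?x = "(par ^^ j) x" and ?y = "(par ^^ j) y"
  have V: "?x \<in> V" "?y \<in> V" using assms funpow_V by blast+
  have d: "dp ?x = dp ?y" using assms dp_funpow by simp
  have dd: "dp (par ?x) = dp (par ?y)"
    using dp_funpow[of x "Suc j"] dp_funpow[of y "Suc j"] assms by simp
  from Suc show ?case
  proof
    assume "pos ?x < pos ?y"
    then have "pos (par ?x) \<le> pos (par ?y)" using planar_step V d by blast
    then have "pos (par ?x) < pos (par ?y) \<or> par ?x = par ?y"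
      using inj_layer[OF parV[OF V(1)] parV[OF V(2)] dd] le_neq_implies_less by blast
    then show ?thesis by simp
  next
    assume "?x = ?y" then show ?thesis by simp
  qed
qed

lemma planar_funpow:
  assumes "x \<in> V" "y \<in> V" "dp x = dp y" "pos x < pos y"
  shows "pos ((par ^^ j) x) \<le> pos ((par ^^ j) y)"
  using planar_funpow_aux[OF assms, of j] by (metis less_imp_le order_refl)

lemma ray_step:
  assumes "downward_path V r par v f" "f i \<in> V"
  shows "f (Suc i) \<in> V \<and> f (Suc i) \<noteq> r \<and> par (f (Suc i)) = f i"
proof -
  have ne: "children V r par (f i) \<noteq> {}" using neat assms(2) unfolding neat_def by blast
  have c: "f (Suc i) \<in> children V r par (f i)" using assms(1) ne unfolding downward_path_def by blast
  then show ?thesis unfolding children_def by auto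
qed

lemma ray_props:
  assumes "downward_path V r par v f" "v \<in> V"
  shows "f i \<in> V \<and> par (f (Suc i)) = f i \<and> dp (f i) = dp v + i"
proof -
  have f0: "f 0 = v" using assms(1) unfolding downward_path_def by blast
  have a: "f i \<in> V \<and> dp (f i) = dp v + i"
  proof (induction i)
    case 0 then show ?case using f0 assms(2) by simp
  next
    case (Suc i)
    have V1: "f (Suc i) \<in> V" "f (Suc i) \<noteq> r" "par (f (Suc i)) = f i"
      using ray_step[OF assms(1)] Suc by blast+
    have "dp (f (Suc i)) = dp v + Suc i" using dp_par[OF V1(1) V1(2)] V1(3) Suc by simp
    then show ?case using V1 by simp
  qed
  then show ?thesis using ray_step[OF assms(1)] by blast
qed

lemma ray_funpow:
  assumes "downward_path V r par v f" "v \<in> V"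
  shows "(par ^^ j) (f (i + j)) = f i"
proof (induction j)
  case 0 then show ?case by simp
next
  case (Suc j)
  have "(par ^^ Suc j) (f (i + Suc j)) = (par ^^ j) (par (f (Suc (i + j))))"
    by (simp only: funpow_Suc_right o_def add_Suc_right)
  also have "\<dots> = (par ^^ j) (f (i + j))" using ray_props[OF assms] by simp
  finally show ?case using Suc by simp
qed

lemma ray_order:
  assumes f: "downward_path V r par a f" "a \<in> V" and g: "downward_path V r par b g" "b \<in> V"
    and d: "dp a = dp b" and p: "pos a < pos b"
  shows "pos (f i) < pos (g i)"
proof (rule ccontr)
  assume "\<not> pos (f i) < pos (g i)"
  then have le: "pos (g i) \<le> pos (f i)" by simp
  have V: "f i \<in> V" "g i \<in> V" and dd: "dp (f i) = dp (g i)" using ray_props[OF f] ray_props[OF g] d by auto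
  have f0: "f 0 = a" and g0: "g 0 = b" using f g unfolding downward_path_def by auto
  show False
  proof (cases "pos (g i) = pos (f i)")
    case True
    then have "g i = f i" using inj_layer V dd by metis
    then have "(par ^^ i) (g (0 + i)) = (par ^^ i) (f (0 + i))" by simp
    then have "b = a" using ray_funpow[OF f, of i 0] ray_funpow[OF g, of i 0] f0 g0 by simp
    then show False using p by simp
  next
    case False
    then have "pos (g i) < pos (f i)" using le by simp
    then have "pos ((par ^^ i) (g i)) \<le> pos ((par ^^ i) (f i))" using planar_funpow V dd by metis
    then have "pos b \<le> pos a" using ray_funpow[OF f, of i 0] ray_funpow[OF g, of i 0] f0 g0 by simp
    then show False using p by simp
  qed
qed

end

context LWS begin

definition lb :: "nat \<Rightarrow> (nat \<Rightarrow> 'v) option \<Rightarrow> 'v \<Rightarrow> bool" where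
  "lb m L x = (case L of None \<Rightarrow> True | Some f \<Rightarrow> pos (f (dp x - m)) \<le> pos x)"
definition ub :: "nat \<Rightarrow> (nat \<Rightarrow> 'v) option \<Rightarrow> 'v \<Rightarrow> bool" where
  "ub m R x = (case R of None \<Rightarrow> True | Some f \<Rightarrow> pos x \<le> pos (f (dp x - m)))"
definition G where "G m L R = {x\<in>V. m \<le> dp x \<and> lb m L x \<and> ub m R x}"
definition rs :: "(nat \<Rightarrow> 'v) option \<Rightarrow> 'v set" where
  "rs L = (case L of None \<Rightarrow> {} | Some f \<Rightarrow> range f)"
definition starts :: "(nat \<Rightarrow> 'v) option \<Rightarrow> 'v set" where
  "starts L = (case L of None \<Rightarrow> {} | Some f \<Rightarrow> {f 0})"
definition Out where "Out m L R = {y\<in>S. dp y < m \<and> (\<exists>x\<in>G m L R \<inter> S. E x y)}"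
definition okray where
  "okray m L = (case L of None \<Rightarrow> True | Some f \<Rightarrow> f 0 \<in> V \<and> dp (f 0) = m
     \<and> downward_path V r par (f 0) f \<and> finite (range f \<inter> S) \<and> card (range f \<inter> S) \<le> h)"
definition Inv where
  "Inv m L R = (okray m L \<and> okray m R \<and> (\<forall>f g. L = Some f \<longrightarrow> R = Some g \<longrightarrow> pos (f 0) < pos (g 0))
     \<and> card (par ` (G m L R \<inter> {x. dp x = m})) \<le> 2)"
definition mu where
  "mu m L R = card (G m L R \<inter> {x. dp x = m}) + (if L = None then 1 else 0) + (if R = None then 1 else 0)"
definition Bd where "Bd = 2*(t+1)+3*h"
definition Concl where
  "Concl m L R = (\<exists>I p i0 B. tree_decomp (S \<inter> (G m L R \<union> Out m L R)) E I p i0 B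
     \<and> (\<forall>i\<in>I. card (B i) \<le> Bd) \<and> S \<inter> (Out m L R \<union> rs L \<union> rs R) \<subseteq> B i0)"

lemma okray_Some: assumes "okray m (Some f)"
  shows "f i \<in> V" "dp (f i) = m + i" "par (f (Suc i)) = f i" "(par ^^ j) (f (i + j)) = f i"
proof -
  have a: "f 0 \<in> V" "dp (f 0) = m" "downward_path V r par (f 0) f" using assms unfolding okray_def by auto
  show "f i \<in> V" "dp (f i) = m + i" "par (f (Suc i)) = f i" using ray_props[OF a(3) a(1), of i] a(2) by auto
  show "(par ^^ j) (f (i + j)) = f i" using ray_funpow[OF a(3) a(1)] by blast
qed

lemma okray_S: assumes "okray m (Some f)" shows "finite (range f \<inter> S)" "card (range f \<inter> S) \<le> h"
  using assms unfolding okray_def by auto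

lemma okray_order: assumes "okray m (Some f)" "okray m (Some g)" "pos (f 0) < pos (g 0)"
  shows "pos (f i) < pos (g i)"
proof -
  have a: "f 0 \<in> V" "dp (f 0) = m" "downward_path V r par (f 0) f" using assms unfolding okray_def by auto
  have b: "g 0 \<in> V" "dp (g 0) = m" "downward_path V r par (g 0) g" using assms unfolding okray_def by auto
  show ?thesis using ray_order[OF a(3) a(1) b(3) b(1)] a b assms(3) by simp
qed

lemma lb_anc:
  assumes f: "okray m (Some f)" and x: "x \<in> V" "m \<le> k" "k \<le> dp x" and le: "pos (f (dp x - m)) \<le> pos x"
  shows "pos (f (k - m)) \<le> pos ((par ^^ (dp x - k)) x)"
proof -
  let ?i = "dp x - m" and ?j = "dp x - k"
  have fi: "f ?i \<in> V" "dp (f ?i) = dp x" using okray_Some[OF f] x by auto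
  have e0: "(par ^^ ?j) (f (k - m + ?j)) = f (k - m)" using okray_Some(4)[OF f] .
  have ee: "k - m + ?j = ?i" using x by simp
  have e: "(par ^^ ?j) (f ?i) = f (k - m)" using e0 ee by metis
  show ?thesis
  proof (cases "f ?i = x")
    case True then show ?thesis using e by simp
  next
    case False
    then have "pos (f ?i) < pos x" using le inj_layer fi x by fastforce
    then show ?thesis using planar_funpow[OF fi(1) x(1) fi(2)] e by metis
  qed
qed

lemma ub_anc:
  assumes f: "okray m (Some f)" and x: "x \<in> V" "m \<le> k" "k \<le> dp x" and le: "pos x \<le> pos (f (dp x - m))"
  shows "pos ((par ^^ (dp x - k)) x) \<le> pos (f (k - m))"
proof -
  let ?i = "dp x - m" and ?j = "dp x - k"
  have fi: "f ?i \<in> V" "dp (f ?i) = dp x" using okray_Some[OF f] x by auto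
  have e0: "(par ^^ ?j) (f (k - m + ?j)) = f (k - m)" using okray_Some(4)[OF f] .
  have ee: "k - m + ?j = ?i" using x by simp
  have e: "(par ^^ ?j) (f ?i) = f (k - m)" using e0 ee by metis
  show ?thesis
  proof (cases "f ?i = x")
    case True then show ?thesis using e by simp
  next
    case False
    then have "pos x < pos (f ?i)" using le inj_layer fi x by fastforce
    then show ?thesis using planar_funpow[OF x(1) fi(1) fi(2)[symmetric]] e by metis
  qed
qed

lemma G_anc:
  assumes "okray m L" "okray m R" "x \<in> G m L R" "m \<le> k" "k \<le> dp x"
  shows "(par ^^ (dp x - k)) x \<in> G m L R"
proof -
  let ?x = "(par ^^ (dp x - k)) x"
  have xV: "x \<in> V" "m \<le> dp x" "lb m L x" "ub m R x" using assms(3) unfolding G_def by auto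
  have x'V: "?x \<in> V" using funpow_V xV by blast
  have dx: "dp ?x = k" using dp_funpow[OF xV(1)] assms by simp
  have "lb m L ?x"
  proof (cases L)
    case None then show ?thesis by (simp add: lb_def)
  next
    case (Some f)
    then show ?thesis using lb_anc[of m f x k] assms xV dx by (simp add: lb_def)
  qed
  moreover have "ub m R ?x"
  proof (cases R)
    case None then show ?thesis by (simp add: ub_def)
  next
    case (Some f)
    then show ?thesis using ub_anc[of m f x k] assms xV dx by (simp add: ub_def)
  qed
  ultimately show ?thesis using x'V dx assms(4) unfolding G_def by simp
qed

lemma ray_in_G:
  assumes "Inv m L R" shows "rs L \<subseteq> G m L R" "rs R \<subseteq> G m L R"
proof -
  have ok: "okray m L" "okray m R" and ord: "\<forall>f g. L = Some f \<longrightarrow> R = Some g \<longrightarrow> pos (f 0) < pos (g 0)"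
    using assms unfolding Inv_def by auto
  show "rs L \<subseteq> G m L R"
  proof (cases L)
    case None then show ?thesis by (simp add: rs_def)
  next
    case (Some f)
    show ?thesis
    proof
      fix z assume "z \<in> rs L"
      then obtain i where z: "z = f i" using Some by (auto simp: rs_def)
      have zz: "f i \<in> V" "dp (f i) = m + i" using okray_Some ok Some by auto
      have "ub m R (f i)"
      proof (cases R)
        case None then show ?thesis by (simp add: ub_def)
      next
        case (Some g)
        then show ?thesis using okray_order[of m f g i] ok ord \<open>L = Some f\<close> zz
          by (simp add: ub_def)
      qed
      then show "z \<in> G m L R" using z zz Some by (simp add: G_def lb_def)
    qed
  qed
  show "rs R \<subseteq> G m L R"
  proof (cases R)
    case None then show ?thesis by (simp add: rs_def)
  next
    case (Some g)
    show ?thesis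
    proof
      fix z assume "z \<in> rs R"
      then obtain i where z: "z = g i" using Some by (auto simp: rs_def)
      have zz: "g i \<in> V" "dp (g i) = m + i" using okray_Some ok Some by auto
      have "lb m L (g i)"
      proof (cases L)
        case None then show ?thesis by (simp add: lb_def)
      next
        case (Some f)
        then show ?thesis using okray_order[of m f g i] ok ord \<open>R = Some g\<close> zz
          by (simp add: lb_def)
      qed
      then show "z \<in> G m L R" using z zz Some by (simp add: G_def ub_def)
    qed
  qed
qed

lemma Gm_finite: "finite (G m L R \<inter> {x. dp x = m})"
proof -
  have "G m L R \<inter> {x. dp x = m} \<subseteq> layer V r par m" unfolding G_def layer_def by auto
  then show ?thesis using finlayer finite_subset by blast
qed

lemma no_cross:
  assumes s: "okray m (Some \<sigma>)" and uv: "u \<in> V" "v \<in> V" "m \<le> dp u" "m \<le> dp v"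
    and pu: "pos u < pos (\<sigma> (dp u - m))" and pv: "pos (\<sigma> (dp v - m)) < pos v"
  shows "\<not> E u v"
proof
  assume e: "E u v"
  show False
  proof (cases "dp u = dp v")
    case True
    let ?n = "dp u"
    have inl: "u \<in> layer V r par ?n" "v \<in> layer V r par ?n" using uv True by (auto simp: layer_def)
    have sl: "\<sigma> (?n - m) \<in> layer V r par ?n" using okray_Some[OF s, of "?n - m"] uv by (auto simp: layer_def)
    have "pos (\<sigma> (?n - m)) < pos v" using pv True by simp
    then show False using Elayer inl sl e pu by fastforce
  next
    case False
    then have "anc par u v \<or> anc par v u" using Eanc e by blast
    then show False
    proof
      assume a: "anc par v u"
      have c: "dp v \<le> dp u" "v = (par ^^ (dp u - dp v)) u" using anc_char[OF uv(1) a] by auto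
      have e0: "(par ^^ (dp u - dp v)) (\<sigma> (dp v - m + (dp u - dp v))) = \<sigma> (dp v - m)"
        using okray_Some(4)[OF s] .
      have "dp v - m + (dp u - dp v) = dp u - m" using c uv by simp
      then have sv: "\<sigma> (dp v - m) = (par ^^ (dp u - dp v)) (\<sigma> (dp u - m))" using e0 by metis
      have sV: "\<sigma> (dp u - m) \<in> V" "dp (\<sigma> (dp u - m)) = dp u" using okray_Some[OF s] uv by auto
      have "pos v \<le> pos (\<sigma> (dp v - m))"
        using planar_funpow[OF uv(1) sV(1) sV(2)[symmetric] pu, of "dp u - dp v"] c sv by simp
      then show False using pv by simp
    next
      assume a: "anc par u v"
      have c: "dp u \<le> dp v" "u = (par ^^ (dp v - dp u)) v" using anc_char[OF uv(2) a] by auto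
      have e0: "(par ^^ (dp v - dp u)) (\<sigma> (dp u - m + (dp v - dp u))) = \<sigma> (dp u - m)"
        using okray_Some(4)[OF s] .
      have "dp u - m + (dp v - dp u) = dp v - m" using c uv by simp
      then have su: "\<sigma> (dp u - m) = (par ^^ (dp v - dp u)) (\<sigma> (dp v - m))" using e0 by metis
      have sV: "\<sigma> (dp v - m) \<in> V" "dp (\<sigma> (dp v - m)) = dp v" using okray_Some[OF s] uv by auto
      have "pos (\<sigma> (dp u - m)) \<le> pos u"
        using planar_funpow[OF sV(1) uv(2) sV(2) pv, of "dp v - dp u"] c su by simp
      then show False using pu by simp
    qed
  qed
qed


definition XX where
  "XX p = (SOME X. finite X \<and> card X \<le> t \<and> (\<forall>x\<in>X. anc par x p)
        \<and> (\<forall>a b. E a b \<and> dp a \<noteq> dp b \<and> anc par p a \<and> \<not> anc par p b \<longrightarrow> b \<in> X))"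

lemma XX: assumes "p \<in> V"
  shows "finite (XX p)" "card (XX p) \<le> t"
    "\<And>a b. E a b \<Longrightarrow> dp a \<noteq> dp b \<Longrightarrow> anc par p a \<Longrightarrow> \<not> anc par p b \<Longrightarrow> b \<in> XX p"
proof -
  have "\<exists>X. finite X \<and> card X \<le> t \<and> (\<forall>x\<in>X. anc par x p)
        \<and> (\<forall>a b. E a b \<and> dp a \<noteq> dp b \<and> anc par p a \<and> \<not> anc par p b \<longrightarrow> b \<in> X)"
    using upw assms by blast
  from someI_ex[OF this] show "finite (XX p)" "card (XX p) \<le> t"
    "\<And>a b. E a b \<Longrightarrow> dp a \<noteq> dp b \<Longrightarrow> anc par p a \<Longrightarrow> \<not> anc par p b \<Longrightarrow> b \<in> XX p"
    unfolding XX_def by blast+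
qed

lemma Out_sub:
  assumes ok: "okray m L" "okray m R"
  shows "Out m L R \<subseteq> (\<Union>p\<in>par ` (G m L R \<inter> {x. dp x = m}). insert p (XX p))"
proof
  fix y assume "y \<in> Out m L R"
  then obtain x where y: "y \<in> S" "dp y < m" and x: "x \<in> G m L R" "x \<in> S" "E x y"
    unfolding Out_def by blast
  have xV: "x \<in> V" "m \<le> dp x" using x unfolding G_def by auto
  have yV: "y \<in> V" using y SV by blast
  have "anc par x y \<or> anc par y x" using Eanc x y xV by fastforce
  moreover have "\<not> anc par x y"
  proof
    assume "anc par x y" then have "dp x \<le> dp y" using anc_char[OF yV] by blast
    then show False using xV y by simp
  qed
  ultimately have ayx: "anc par y x" by blast
  let ?a = "(par ^^ (dp x - m)) x"
  have aG: "?a \<in> G m L R" using G_anc[OF ok x(1)] xV by simp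
  have aV: "?a \<in> V" and da: "dp ?a = m" using aG dp_funpow[OF xV(1)] xV unfolding G_def by auto
  let ?p = "par ?a"
  have pin: "?p \<in> par ` (G m L R \<inter> {x. dp x = m})" using aG da by blast
  have pV: "?p \<in> V" using parV aV by blast
  have yeq: "y = (par ^^ (dp x - dp y)) x" using anc_char[OF xV(1) ayx] by blast
  have split: "dp x - dp y = (m - 1 - dp y) + Suc (dp x - m)" using y xV by simp
  have "(par ^^ (dp x - dp y)) x = (par ^^ (m - 1 - dp y)) ((par ^^ Suc (dp x - m)) x)"
    unfolding split funpow_add by simp
  then have "(par ^^ (m - 1 - dp y)) ?p = y" using yeq by simp
  then have ayp: "anc par y ?p" unfolding anc_def by blast
  have apx: "anc par ?p x" unfolding anc_def by (intro exI[of _ "Suc (dp x - m)"]) simp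
  show "y \<in> (\<Union>p\<in>par ` (G m L R \<inter> {x. dp x = m}). insert p (XX p))"
  proof (cases "y = ?p")
    case True then show ?thesis using pin by blast
  next
    case False
    have "\<not> anc par ?p y"
    proof
      assume "anc par ?p y"
      then have "dp ?p \<le> dp y" "?p = (par ^^ (dp y - dp ?p)) y" using anc_char[OF yV] by blast+
      moreover have "dp y \<le> dp ?p" using anc_char[OF pV ayp] by blast
      ultimately show False using False by simp
    qed
    then have "y \<in> XX ?p" using XX(3)[OF pV x(3) _ apx] xV y by simp
    then show ?thesis using pin by blast
  qed
qed

lemma Out_card:
  assumes "Inv m L R" shows "finite (Out m L R)" "card (Out m L R) \<le> 2*(t+1)"
proof -
  have ok: "okray m L" "okray m R" and c2: "card (par ` (G m L R \<inter> {x. dp x = m})) \<le> 2"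
    using assms unfolding Inv_def by auto
  let ?P = "par ` (G m L R \<inter> {x. dp x = m})"
  have fP: "finite ?P" using Gm_finite by blast
  have PV: "?P \<subseteq> V" unfolding G_def using parV by auto
  have fin: "finite (\<Union>p\<in>?P. insert p (XX p))" using fP XX(1) PV by blast
  then show "finite (Out m L R)" using Out_sub[OF ok] finite_subset by blast
  have "card (\<Union>p\<in>?P. insert p (XX p)) \<le> (\<Sum>p\<in>?P. card (insert p (XX p)))"
    using card_UN_le fP by blast
  also have "\<dots> \<le> (\<Sum>p\<in>?P. t + 1)"
  proof (rule sum_mono)
    fix p assume "p \<in> ?P"
    then have "p \<in> V" using PV by blast
    then show "card (insert p (XX p)) \<le> t + 1"
      using XX[of p] card_insert_le_m1 by (metis Suc_eq_plus1 card_insert_if le_SucI nat_le_linear not_less_eq_eq)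
  qed
  also have "\<dots> = card ?P * (t+1)" by simp
  also have "\<dots> \<le> 2 * (t+1)" using c2 mult_le_mono1 by blast
  finally show "card (Out m L R) \<le> 2*(t+1)"
    using card_mono[OF fin Out_sub[OF ok]] by linarith
qed

end

context LWS begin

lemma adj_up: assumes "E x y" "dp y < dp x" shows "y = (par ^^ (dp x - dp y)) x"
proof -
  have V: "x \<in> V" "y \<in> V" using Esym assms by auto
  have "anc par x y \<or> anc par y x" using Eanc assms by fastforce
  moreover have "\<not> anc par x y" using anc_char(1)[OF V(2)] assms(2) by fastforce
  ultimately show ?thesis using anc_char(2)[OF V(1)] by blast
qed

lemma rsS: assumes "okray m L" shows "finite (rs L \<inter> S)" "card (rs L \<inter> S) \<le> h"
  using assms okray_S by (cases L; simp add: rs_def)+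

lemma GV: "x \<in> G m L R \<Longrightarrow> x \<in> V \<and> m \<le> dp x" unfolding G_def by auto

lemma Y_card:
  assumes "finite O1" "card O1 \<le> 2*(t+1)" "okray m L" "okray m R" "okray m M"
  shows "card (S \<inter> (O1 \<union> rs L \<union> rs R \<union> rs M)) \<le> Bd"
proof -
  have "S \<inter> (O1 \<union> rs L \<union> rs R \<union> rs M) \<subseteq> O1 \<union> (rs L \<inter> S) \<union> (rs R \<inter> S) \<union> (rs M \<inter> S)" by blast
  moreover have f: "finite (O1 \<union> (rs L \<inter> S) \<union> (rs R \<inter> S) \<union> (rs M \<inter> S))"
    using assms rsS by blast
  ultimately have "card (S \<inter> (O1 \<union> rs L \<union> rs R \<union> rs M)) \<le> card (O1 \<union> (rs L \<inter> S) \<union> (rs R \<inter> S) \<union> (rs M \<inter> S))"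
    by (meson card_mono)
  also have "\<dots> \<le> card O1 + card (rs L \<inter> S) + card (rs R \<inter> S) + card (rs M \<inter> S)"
    by (meson add_le_mono card_Un_le le_refl order_trans)
  also have "\<dots> \<le> Bd" using assms rsS[of m L] rsS[of m R] rsS[of m M] unfolding Bd_def by linarith
  finally show ?thesis .
qed

lemma base_case: assumes "Inv m L R" "N \<le> m" shows "Concl m L R"
proof -
  have ok: "okray m L" "okray m R" using assms unfolding Inv_def by auto
  have SG: "S \<inter> G m L R = {}" using Ndep assms(2) GV by fastforce
  have O: "Out m L R = {}" using SG unfolding Out_def by blast
  have r: "S \<inter> rs L = {}" "S \<inter> rs R = {}" using ray_in_G[OF assms(1)] SG by blast+
  have A: "S \<inter> (G m L R \<union> Out m L R) = {}" using SG O by blast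
  show ?thesis unfolding Concl_def A
    using td_single[of "{}" E] r O by (intro exI[of _ "{0}"] exI[of _ "\<lambda>_. 0"] exI[of _ 0] exI[of _ "\<lambda>_. {}"]) auto
qed

end

context LWS begin
definition sh :: "(nat \<Rightarrow> 'v) option \<Rightarrow> (nat \<Rightarrow> 'v) option" where
  "sh L = map_option (\<lambda>f. f \<circ> Suc) L"

lemma okray_sh: assumes "okray m L" shows "okray (Suc m) (sh L)"
proof (cases L)
  case None then show ?thesis by (simp add: sh_def okray_def)
next
  case (Some f)
  have a: "f 0 \<in> V" "dp (f 0) = m" "downward_path V r par (f 0) f" "finite (range f \<inter> S)" "card (range f \<inter> S) \<le> h"
    using assms Some unfolding okray_def by auto
  have dpth: "downward_path V r par (f 1) (f \<circ> Suc)"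
    using a(3) unfolding downward_path_def by simp
  have sub: "range (f \<circ> Suc) \<inter> S \<subseteq> range f \<inter> S" by auto
  have c2: "card (range (f \<circ> Suc) \<inter> S) \<le> h" using card_mono[OF a(4) sub] a(5) by linarith
  have f2: "finite (range (f \<circ> Suc) \<inter> S)" using a(4) sub finite_subset by blast
  have o1: "f 1 \<in> V" "dp (f 1) = Suc m" using okray_Some[OF assms[unfolded Some], of 1] by auto
  show ?thesis unfolding Some sh_def okray_def option.map option.case
    using c2 f2 o1 dpth by simp
qed

lemma G_sh: "G (Suc m) (sh L) (sh R) = G m L R \<inter> {x. Suc m \<le> dp x}"
proof -
  have "lb (Suc m) (sh L) x = lb m L x" if "Suc m \<le> dp x" for x
    using that by (cases L) (auto simp: lb_def sh_def Suc_diff_Suc)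
  moreover have "ub (Suc m) (sh R) x = ub m R x" if "Suc m \<le> dp x" for x
    using that by (cases R) (auto simp: ub_def sh_def Suc_diff_Suc)
  ultimately show ?thesis unfolding G_def by auto
qed

lemma starts_card: "card (starts L \<union> starts R) \<le> 2"
proof -
  have "card (starts L) \<le> 1" by (cases L) (simp_all add: starts_def)
  moreover have "card (starts R) \<le> 1" by (cases R) (simp_all add: starts_def)
  ultimately show ?thesis using card_Un_le[of "starts L" "starts R"] by linarith
qed

lemma starts_rs: "starts L \<subseteq> rs L" by (cases L) (auto simp: starts_def rs_def)

lemma rs_sh: "rs (sh L) \<subseteq> rs L" by (cases L) (auto simp: rs_def sh_def)

lemma inv_descend:
  assumes inv: "Inv m L R" and st: "G m L R \<inter> {x. dp x = m} \<subseteq> starts L \<union> starts R"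
  shows "Inv (Suc m) (sh L) (sh R)"
proof -
  have ok: "okray m L" "okray m R" and ord: "\<forall>f g. L = Some f \<longrightarrow> R = Some g \<longrightarrow> pos (f 0) < pos (g 0)"
    using inv unfolding Inv_def by auto
  have ord': "\<forall>f g. sh L = Some f \<longrightarrow> sh R = Some g \<longrightarrow> pos (f 0) < pos (g 0)"
    using ord ok okray_order by (auto simp: sh_def)
  have sub: "par ` (G (Suc m) (sh L) (sh R) \<inter> {x. dp x = Suc m}) \<subseteq> starts L \<union> starts R"
  proof
    fix z assume "z \<in> par ` (G (Suc m) (sh L) (sh R) \<inter> {x. dp x = Suc m})"
    then obtain x where x: "x \<in> G m L R" "dp x = Suc m" "z = par x" using G_sh by auto
    have "(par ^^ (dp x - m)) x \<in> G m L R" using G_anc[OF ok x(1), of m] x by simp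
    then have "z \<in> G m L R" using x by simp
    moreover have "dp z = m" using dp_funpow[of x 1] GV[OF x(1)] x by simp
    ultimately show "z \<in> starts L \<union> starts R" using st by blast
  qed
  have "finite (starts L \<union> starts R)" by (cases L; cases R) (auto simp: starts_def)
  then have "card (par ` (G (Suc m) (sh L) (sh R) \<inter> {x. dp x = Suc m})) \<le> 2"
    using card_mono[OF _ sub] starts_card le_trans by blast
  then show ?thesis unfolding Inv_def using okray_sh ok ord' by blast
qed

end

context LWS begin

lemma rs_None: "rs None = {}" by (simp add: rs_def)
lemma okray_None: "okray m None" by (simp add: okray_def)

lemma concl_descend:
  assumes inv: "Inv m L R" and st: "G m L R \<inter> {x. dp x = m} \<subseteq> starts L \<union> starts R"
    and IH: "Concl (Suc m) (sh L) (sh R)"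
  shows "Concl m L R"
proof -
  have ok: "okray m L" "okray m R" using inv unfolding Inv_def by auto
  define G' where "G' = G (Suc m) (sh L) (sh R)"
  define O' where "O' = Out (Suc m) (sh L) (sh R)"
  define A' where "A' = S \<inter> (G' \<union> O')"
  define A where "A = S \<inter> (G m L R \<union> Out m L R)"
  define Y where "Y = S \<inter> (Out m L R \<union> rs L \<union> rs R)"
  obtain I1 p1 a1 B1 where D1: "tree_decomp A' E I1 p1 a1 B1" and bs1: "\<forall>i\<in>I1. card (B1 i) \<le> Bd"
    and rt1: "S \<inter> (O' \<union> rs (sh L) \<union> rs (sh R)) \<subseteq> B1 a1"
    using IH unfolding Concl_def A'_def G'_def O'_def by blast
  have G'eq: "G' = G m L R \<inter> {x. Suc m \<le> dp x}" unfolding G'_def by (rule G_sh)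
  have rays: "rs L \<subseteq> G m L R" "rs R \<subseteq> G m L R" using ray_in_G[OF inv] by auto
  have mid: "S \<inter> G m L R \<inter> {x. dp x = m} \<subseteq> Y" using st starts_rs[of L] starts_rs[of R] Y_def by blast
  have OutD: "\<And>y. y \<in> Out m L R \<Longrightarrow> dp y < m \<and> y \<in> S" unfolding Out_def by blast
  have O'sub: "O' \<subseteq> Out m L R \<union> (S \<inter> G m L R \<inter> {x. dp x = m})"
  proof
    fix y assume "y \<in> O'"
    then obtain x where y: "y \<in> S" "dp y < Suc m" and x: "x \<in> G'" "x \<in> S" "E x y"
      unfolding O'_def Out_def G'_def by blast
    have xG: "x \<in> G m L R" "Suc m \<le> dp x" using x G'eq by auto
    show "y \<in> Out m L R \<union> (S \<inter> G m L R \<inter> {x. dp x = m})"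
    proof (cases "dp y < m")
      case True then show ?thesis using y x xG unfolding Out_def by blast
    next
      case False
      then have dy: "dp y = m" using y by simp
      have "y = (par ^^ (dp x - dp y)) x" using adj_up[OF x(3)] xG dy by simp
      then have "y \<in> G m L R" using G_anc[OF ok xG(1), of m] xG dy by simp
      then show ?thesis using y dy by blast
    qed
  qed
  have A_eq: "A = A' \<union> {} \<union> Y"
  proof
    show "A \<subseteq> A' \<union> {} \<union> Y"
    proof
      fix z assume "z \<in> A"
      then consider "z \<in> S" "z \<in> G m L R" | "z \<in> Out m L R" unfolding A_def by blast
      then show "z \<in> A' \<union> {} \<union> Y"
      proof cases
        case 1
        show ?thesis
        proof (cases "dp z = m")
          case True then show ?thesis using mid 1 by blast
        next
          case False
          then have "Suc m \<le> dp z" using 1 GV by fastforce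
          then show ?thesis using 1 G'eq unfolding A'_def by blast
        qed
      next
        case 2 then show ?thesis using OutD unfolding Y_def by blast
      qed
    qed
    show "A' \<union> {} \<union> Y \<subseteq> A"
      using O'sub G'eq rays unfolding A'_def Y_def A_def by blast
  qed
  have sh1: "A' \<inter> Y \<subseteq> B1 a1"
  proof
    fix z assume z: "z \<in> A' \<inter> Y"
    show "z \<in> B1 a1"
    proof (cases "z \<in> O'")
      case True then show ?thesis using rt1 z unfolding A'_def by blast
    next
      case False
      then have zG: "z \<in> S" "z \<in> G'" using z unfolding A'_def by auto
      then have dz: "Suc m \<le> dp z" using G'eq by auto
      have "z \<in> Out m L R \<or> z \<in> rs L \<or> z \<in> rs R" using z unfolding Y_def by blast
      moreover have "z \<notin> Out m L R" using OutD dz by fastforce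
      moreover have "z \<in> rs (sh L)" if zrL: "z \<in> rs L"
      proof (cases L)
        case None then show ?thesis using zrL by (simp add: rs_def)
      next
        case (Some f)
        then obtain i where i: "z = f i" using zrL by (auto simp: rs_def)
        have "dp (f i) = m + i" using okray_Some ok Some by blast
        then obtain j where "i = Suc j" using dz i by (cases i) auto
        then show ?thesis using i Some by (auto simp: rs_def sh_def)
      qed
      moreover have "z \<in> rs (sh R)" if zrR: "z \<in> rs R"
      proof (cases R)
        case None then show ?thesis using zrR by (simp add: rs_def)
      next
        case (Some f)
        then obtain i where i: "z = f i" using zrR by (auto simp: rs_def)
        have "dp (f i) = m + i" using okray_Some ok Some by blast
        then obtain j where "i = Suc j" using dz i by (cases i) auto
        then show ?thesis using i Some by (auto simp: rs_def sh_def)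
      qed
      ultimately show ?thesis using rt1 zG by blast
    qed
  qed
  have c1: "u \<in> S \<and> u \<in> G'" if "u \<in> A" "u \<notin> Y" for u
  proof -
    have "u \<in> A'" using that A_eq by blast
    moreover have "u \<notin> O'" using that O'sub mid unfolding Y_def A_def by blast
    ultimately show ?thesis unfolding A'_def by blast
  qed
  have c2: "v \<in> A'" if "u \<in> S" "u \<in> G'" "v \<in> A" "E u v" for u v
  proof (cases "v \<in> G m L R \<and> Suc m \<le> dp v")
    case True then show ?thesis using that G'eq unfolding A_def A'_def by blast
  next
    case False
    have vS: "v \<in> S" using that unfolding A_def by blast
    have "dp v < Suc m" using False that OutD unfolding A_def by fastforce
    then have "v \<in> O'" using that vS unfolding O'_def Out_def G'_def by blast
    then show ?thesis using vS unfolding A'_def by blast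
  qed
  have edges: "\<forall>u\<in>A. \<forall>v\<in>A. E u v \<longrightarrow> (u\<in>A' \<and> v\<in>A') \<or> (u\<in>{} \<and> v\<in>{}) \<or> (u\<in>Y \<and> v\<in>Y)"
  proof (intro ballI impI)
    fix u v assume uv: "u \<in> A" "v \<in> A" "E u v"
    have vu: "E v u" using uv Esym by blast
    show "(u\<in>A' \<and> v\<in>A') \<or> (u\<in>{} \<and> v\<in>{}) \<or> (u\<in>Y \<and> v\<in>Y)"
    proof (cases "u \<in> Y")
      case True
      show ?thesis
      proof (cases "v \<in> Y")
        case True then show ?thesis using \<open>u \<in> Y\<close> by blast
      next
        case False
        then have "v \<in> S" "v \<in> G'" using c1 uv by auto
        then have "u \<in> A'" using c2 uv vu by blast
        moreover have "v \<in> A'" using \<open>v \<in> S\<close> \<open>v \<in> G'\<close> unfolding A'_def by blast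
        ultimately show ?thesis by blast
      qed
    next
      case False
      then have "u \<in> S" "u \<in> G'" using c1 uv by auto
      then have "v \<in> A'" using c2 uv by blast
      moreover have "u \<in> A'" using \<open>u \<in> S\<close> \<open>u \<in> G'\<close> unfolding A'_def by blast
      ultimately show ?thesis by blast
    qed
  qed
  obtain I p i0 B where D: "tree_decomp A E I p i0 B" and Bi0: "B i0 = Y"
    and bags: "\<forall>i\<in>I. B i = Y \<or> (\<exists>j\<in>I1. B i = B1 j) \<or> (\<exists>j\<in>{0::nat}. B i = {})"
    using td_glue[OF D1 td_single[of "{}" E], of Y A] sh1 A_eq edges by auto
  have "finite (Out m L R)" "card (Out m L R) \<le> 2*(t+1)" using Out_card[OF inv] by auto
  then have cY: "card Y \<le> Bd" using Y_card[of "Out m L R" m L R None] ok okray_None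
    unfolding Y_def rs_None by simp
  have "\<forall>i\<in>I. card (B i) \<le> Bd" using bags bs1 cY by fastforce
  then show ?thesis unfolding Concl_def using D Bi0 unfolding A_def Y_def by blast
qed

end

context LWS begin

context
  fixes m L R d \<sigma>
  assumes inv: "Inv m L R" and dG: "d \<in> G m L R" and dm: "dp d = m" and dns: "d \<notin> starts L \<union> starts R"
    and sig: "downward_path V r par d \<sigma>" "finite (range \<sigma> \<inter> S)" "card (range \<sigma> \<inter> S) \<le> h"
begin

lemma ok: "okray m L" "okray m R" and ord: "\<forall>f g. L = Some f \<longrightarrow> R = Some g \<longrightarrow> pos (f 0) < pos (g 0)"
    and c2: "card (par ` (G m L R \<inter> {x. dp x = m})) \<le> 2"
  using inv unfolding Inv_def by auto

lemma dV: "d \<in> V" using dG GV by blast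

lemma s0: "\<sigma> 0 = d" using sig unfolding downward_path_def by blast

lemma okM: "okray m (Some \<sigma>)" using sig s0 dV dm unfolding okray_def by simp

lemma pLd: "L = Some f \<Longrightarrow> pos (f 0) < pos d"
proof -
  assume L: "L = Some f"
  have le: "pos (f 0) \<le> pos d" using dG dm L unfolding G_def lb_def by simp
  have ne: "f 0 \<noteq> d" using dns L unfolding starts_def by auto
  have "f 0 \<in> V" "dp (f 0) = m" using okray_Some[of m f 0] ok L by auto
  then show ?thesis using le ne inj_layer dV dm by fastforce
qed

lemma pdR: "R = Some g \<Longrightarrow> pos d < pos (g 0)"
proof -
  assume R: "R = Some g"
  have le: "pos d \<le> pos (g 0)" using dG dm R unfolding G_def ub_def by simp
  have ne: "g 0 \<noteq> d" using dns R unfolding starts_def by auto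
  have "g 0 \<in> V" "dp (g 0) = m" using okray_Some[of m g 0] ok R by auto
  then show ?thesis using le ne inj_layer dV dm by fastforce
qed

lemma sigR: "R = Some g \<Longrightarrow> pos (\<sigma> i) < pos (g i)"
  using okray_order[OF okM, of g i] ok pdR s0 by simp

lemma Lsig: "L = Some f \<Longrightarrow> pos (f i) < pos (\<sigma> i)"
  using okray_order[OF _ okM, of f i] ok pLd s0 by simp

lemma G1sub: "G m L (Some \<sigma>) \<subseteq> G m L R"
proof
  fix x assume x: "x \<in> G m L (Some \<sigma>)"
  have "ub m R x"
  proof (cases R)
    case None then show ?thesis by (simp add: ub_def)
  next
    case (Some g)
    then show ?thesis using x sigR[OF Some, of "dp x - m"] unfolding G_def ub_def by simp
  qed
  then show "x \<in> G m L R" using x unfolding G_def by simp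
qed

lemma G2sub: "G m (Some \<sigma>) R \<subseteq> G m L R"
proof
  fix x assume x: "x \<in> G m (Some \<sigma>) R"
  have "lb m L x"
  proof (cases L)
    case None then show ?thesis by (simp add: lb_def)
  next
    case (Some f)
    then show ?thesis using x Lsig[OF Some, of "dp x - m"] unfolding G_def lb_def by simp
  qed
  then show "x \<in> G m L R" using x unfolding G_def by simp
qed

lemma inv1: "Inv m L (Some \<sigma>)"
proof -
  have "card (par ` (G m L (Some \<sigma>) \<inter> {x. dp x = m})) \<le> card (par ` (G m L R \<inter> {x. dp x = m}))"
    using G1sub Gm_finite by (intro card_mono) auto
  then show ?thesis unfolding Inv_def using ok okM pLd s0 c2 by auto
qed

lemma inv2: "Inv m (Some \<sigma>) R"
proof -
  have "card (par ` (G m (Some \<sigma>) R \<inter> {x. dp x = m})) \<le> card (par ` (G m L R \<inter> {x. dp x = m}))"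
    using G2sub Gm_finite by (intro card_mono) auto
  then show ?thesis unfolding Inv_def using ok okM pdR s0 c2 by auto
qed

lemma mu1: "mu m L (Some \<sigma>) < mu m L R"
proof (cases R)
  case None
  have "card (G m L (Some \<sigma>) \<inter> {x. dp x = m}) \<le> card (G m L R \<inter> {x. dp x = m})"
    using G1sub Gm_finite by (intro card_mono) auto
  then show ?thesis using None unfolding mu_def by simp
next
  case (Some g)
  have g0: "g 0 \<in> G m L R" "dp (g 0) = m" using ray_in_G(2)[OF inv] Some okray_Some[of m g 0] ok
    by (auto simp: rs_def)
  have "g 0 \<notin> G m L (Some \<sigma>)" using g0 pdR[OF Some] s0 unfolding G_def ub_def by auto
  then have "G m L (Some \<sigma>) \<inter> {x. dp x = m} \<subset> G m L R \<inter> {x. dp x = m}" using G1sub g0 by blast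
  then have "card (G m L (Some \<sigma>) \<inter> {x. dp x = m}) < card (G m L R \<inter> {x. dp x = m})"
    using Gm_finite psubset_card_mono by blast
  then show ?thesis using Some unfolding mu_def by simp
qed

lemma mu2: "mu m (Some \<sigma>) R < mu m L R"
proof (cases L)
  case None
  have "card (G m (Some \<sigma>) R \<inter> {x. dp x = m}) \<le> card (G m L R \<inter> {x. dp x = m})"
    using G2sub Gm_finite by (intro card_mono) auto
  then show ?thesis using None unfolding mu_def by simp
next
  case (Some f)
  have f0: "f 0 \<in> G m L R" "dp (f 0) = m" using ray_in_G(1)[OF inv] Some okray_Some[of m f 0] ok
    by (auto simp: rs_def)
  have "f 0 \<notin> G m (Some \<sigma>) R" using f0 pLd[OF Some] s0 unfolding G_def lb_def by auto
  then have "G m (Some \<sigma>) R \<inter> {x. dp x = m} \<subset> G m L R \<inter> {x. dp x = m}" using G2sub f0 by blast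
  then have "card (G m (Some \<sigma>) R \<inter> {x. dp x = m}) < card (G m L R \<inter> {x. dp x = m})"
    using Gm_finite psubset_card_mono by blast
  then show ?thesis using Some unfolding mu_def by simp
qed


lemma concl_split:
  assumes C1: "Concl m L (Some \<sigma>)" and C2: "Concl m (Some \<sigma>) R"
  shows "Concl m L R"
proof -
  define G1 where "G1 = G m L (Some \<sigma>)"
  define G2 where "G2 = G m (Some \<sigma>) R"
  define O1 where "O1 = Out m L (Some \<sigma>)"
  define O2 where "O2 = Out m (Some \<sigma>) R"
  define A1 where "A1 = S \<inter> (G1 \<union> O1)"
  define A2 where "A2 = S \<inter> (G2 \<union> O2)"
  define A where "A = S \<inter> (G m L R \<union> Out m L R)"
  define Y where "Y = S \<inter> (Out m L R \<union> rs L \<union> rs R \<union> range \<sigma>)"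
  have rsM: "rs (Some \<sigma>) = range \<sigma>" by (simp add: rs_def)
  obtain I1 p1 a1 B1 where D1: "tree_decomp A1 E I1 p1 a1 B1" and bs1: "\<forall>i\<in>I1. card (B1 i) \<le> Bd"
    and rt1: "S \<inter> (O1 \<union> rs L \<union> range \<sigma>) \<subseteq> B1 a1"
    using C1 unfolding Concl_def A1_def G1_def O1_def rsM by blast
  obtain I2 p2 a2 B2 where D2: "tree_decomp A2 E I2 p2 a2 B2" and bs2: "\<forall>i\<in>I2. card (B2 i) \<le> Bd"
    and rt2: "S \<inter> (O2 \<union> range \<sigma> \<union> rs R) \<subseteq> B2 a2"
    using C2 unfolding Concl_def A2_def G2_def O2_def rsM by blast
  have O1sub: "O1 \<subseteq> Out m L R" using G1sub unfolding O1_def Out_def by blast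
  have O2sub: "O2 \<subseteq> Out m L R" using G2sub unfolding O2_def Out_def by blast
  have OutD: "\<And>y. y \<in> Out m L R \<Longrightarrow> dp y < m \<and> y \<in> S" unfolding Out_def by blast
  have sigG: "range \<sigma> \<subseteq> G m L R" using ray_in_G(2)[OF inv1] G1sub rsM by blast
  have rays: "rs L \<subseteq> G m L R" "rs R \<subseteq> G m L R" using ray_in_G[OF inv] by auto
  have sV: "\<sigma> i \<in> V" "dp (\<sigma> i) = m + i" for i using okray_Some[OF okM] by auto
  have toG1: "z \<in> G1" if "z \<in> G m L R" "pos z \<le> pos (\<sigma> (dp z - m))" for z
    using that unfolding G1_def G_def ub_def by simp
  have toG2: "z \<in> G2" if "z \<in> G m L R" "pos (\<sigma> (dp z - m)) \<le> pos z" for z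
    using that unfolding G2_def G_def lb_def by simp
  have onsig: "z = \<sigma> (dp z - m)" if "z \<in> V" "m \<le> dp z" "pos z = pos (\<sigma> (dp z - m))" for z
    using inj_layer[OF that(1) sV(1)] sV(2) that by simp
  have G1D: "z \<in> V \<and> m \<le> dp z \<and> pos z \<le> pos (\<sigma> (dp z - m))" if "z \<in> G1" for z
    using that unfolding G1_def G_def ub_def by simp
  have G2D: "z \<in> V \<and> m \<le> dp z \<and> pos (\<sigma> (dp z - m)) \<le> pos z" if "z \<in> G2" for z
    using that unfolding G2_def G_def lb_def by simp
  have shr: "A1 \<inter> A2 \<subseteq> Y"
  proof
    fix z assume z: "z \<in> A1 \<inter> A2"
    show "z \<in> Y"
    proof (cases "z \<in> O1 \<or> z \<in> O2")
      case True then show ?thesis using O1sub O2sub z unfolding Y_def A1_def by blast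
    next
      case False
      then have "z \<in> G1" "z \<in> G2" "z \<in> S" using z unfolding A1_def A2_def by auto
      then have "z = \<sigma> (dp z - m)" using G1D G2D onsig by (meson le_antisym)
      then show ?thesis using \<open>z \<in> S\<close> unfolding Y_def by (metis UnI2 IntI rangeI)
    qed
  qed
  have r1: "A1 \<inter> Y \<subseteq> B1 a1"
  proof
    fix z assume z: "z \<in> A1 \<inter> Y"
    show "z \<in> B1 a1"
    proof (cases "z \<in> O1")
      case True then show ?thesis using rt1 z unfolding A1_def by blast
    next
      case False
      then have zG: "z \<in> S" "z \<in> G1" using z unfolding A1_def by auto
      have "z \<notin> Out m L R" using OutD G1D zG by fastforce
      moreover have "z \<notin> rs R"
      proof
        assume "z \<in> rs R"
        then obtain g i where R: "R = Some g" and zi: "z = g i" by (cases R) (auto simp: rs_def)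
        have "dp (g i) = m + i" using okray_Some ok R by blast
        then show False using G1D[OF zG(2)] zi sigR[OF R, of i] by simp
      qed
      ultimately show ?thesis using z rt1 unfolding Y_def by blast
    qed
  qed
  have r2: "A2 \<inter> Y \<subseteq> B2 a2"
  proof
    fix z assume z: "z \<in> A2 \<inter> Y"
    show "z \<in> B2 a2"
    proof (cases "z \<in> O2")
      case True then show ?thesis using rt2 z unfolding A2_def by blast
    next
      case False
      then have zG: "z \<in> S" "z \<in> G2" using z unfolding A2_def by auto
      have "z \<notin> Out m L R" using OutD G2D zG by fastforce
      moreover have "z \<notin> rs L"
      proof
        assume "z \<in> rs L"
        then obtain f i where L: "L = Some f" and zi: "z = f i" by (cases L) (auto simp: rs_def)
        have "dp (f i) = m + i" using okray_Some ok L by blast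
        then show False using G2D[OF zG(2)] zi Lsig[OF L, of i] by simp
      qed
      ultimately show ?thesis using z rt2 unfolding Y_def by blast
    qed
  qed
  have A_eq: "A = A1 \<union> A2 \<union> Y"
  proof
    show "A \<subseteq> A1 \<union> A2 \<union> Y"
    proof
      fix z assume "z \<in> A"
      then consider "z \<in> S" "z \<in> G m L R" | "z \<in> Out m L R" unfolding A_def by blast
      then show "z \<in> A1 \<union> A2 \<union> Y"
      proof cases
        case 1
        then show ?thesis using toG1[OF 1(2)] toG2[OF 1(2)] unfolding A1_def A2_def by fastforce
      next
        case 2 then show ?thesis using OutD unfolding Y_def by blast
      qed
    qed
    show "A1 \<union> A2 \<union> Y \<subseteq> A"
      using G1sub G2sub O1sub O2sub rays sigG unfolding A1_def A2_def Y_def A_def G1_def G2_def by blast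
  qed
  have key: "(u\<in>A1 \<and> v\<in>A1) \<or> (u\<in>A2 \<and> v\<in>A2)" if u: "u \<in> A" "u \<notin> Y" and v: "v \<in> A" and e: "E u v" for u v
  proof -
    have uS: "u \<in> S" "u \<in> G m L R" using u OutD unfolding A_def Y_def by blast+
    have uV: "u \<in> V" "m \<le> dp u" using uS GV by auto
    have vS: "v \<in> S" using v unfolding A_def by blast
    have ns: "u \<noteq> \<sigma> (dp u - m)" using u uS unfolding Y_def by blast
    have vu: "E v u" using e Esym by blast
    have vG: "v \<in> G m L R" if "m \<le> dp v" using v that OutD unfolding A_def by fastforce
    have "pos u \<noteq> pos (\<sigma> (dp u - m))" using onsig uV ns by blast
    then consider "pos u < pos (\<sigma> (dp u - m))" | "pos (\<sigma> (dp u - m)) < pos u" by linarith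
    then show ?thesis
    proof cases
      case 1
      have uG1: "u \<in> G1" using toG1 uS 1 by simp
      show ?thesis
      proof (cases "dp v < m")
        case True
        then have "v \<in> O1" using uG1 uS vS e unfolding O1_def Out_def G1_def by blast
        then show ?thesis using uG1 uS vS unfolding A1_def by blast
      next
        case False
        then have vG': "v \<in> G m L R" "v \<in> V" "m \<le> dp v" using vG GV by auto
        show ?thesis
        proof (cases "pos v \<le> pos (\<sigma> (dp v - m))")
          case True
          then show ?thesis using toG1[OF vG'(1)] uG1 uS vS unfolding A1_def by blast
        next
          case False
          then have "\<not> E u v" using no_cross[OF okM uV(1) vG'(2) uV(2) vG'(3) 1] by simp
          then show ?thesis using e by blast
        qed
      qed
    next
      case 2
      have uG2: "u \<in> G2" using toG2 uS 2 by simp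
      show ?thesis
      proof (cases "dp v < m")
        case True
        then have "v \<in> O2" using uG2 uS vS e unfolding O2_def Out_def G2_def by blast
        then show ?thesis using uG2 uS vS unfolding A2_def by blast
      next
        case False
        then have vG': "v \<in> G m L R" "v \<in> V" "m \<le> dp v" using vG GV by auto
        show ?thesis
        proof (cases "pos (\<sigma> (dp v - m)) \<le> pos v")
          case True
          then show ?thesis using toG2[OF vG'(1)] uG2 uS vS unfolding A2_def by blast
        next
          case False
          then have "\<not> E v u" using no_cross[OF okM vG'(2) uV(1) vG'(3) uV(2) _ 2] by simp
          then show ?thesis using vu by blast
        qed
      qed
    qed
  qed
  have edges: "\<forall>u\<in>A. \<forall>v\<in>A. E u v \<longrightarrow> (u\<in>A1 \<and> v\<in>A1) \<or> (u\<in>A2 \<and> v\<in>A2) \<or> (u\<in>Y \<and> v\<in>Y)"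
  proof (intro ballI impI)
    fix u v assume uv: "u \<in> A" "v \<in> A" "E u v"
    have vu: "E v u" using uv Esym by blast
    show "(u\<in>A1 \<and> v\<in>A1) \<or> (u\<in>A2 \<and> v\<in>A2) \<or> (u\<in>Y \<and> v\<in>Y)"
    proof (cases "u \<in> Y")
      case True
      show ?thesis
      proof (cases "v \<in> Y")
        case True then show ?thesis using \<open>u \<in> Y\<close> by blast
      next
        case False then show ?thesis using key[OF uv(2) False uv(1) vu] by blast
      qed
    next
      case False then show ?thesis using key[OF uv(1) False uv(2) uv(3)] by blast
    qed
  qed
  obtain I p i0 B where D: "tree_decomp A E I p i0 B" and Bi0: "B i0 = Y"
    and bags: "\<forall>i\<in>I. B i = Y \<or> (\<exists>j\<in>I1. B i = B1 j) \<or> (\<exists>j\<in>I2. B i = B2 j)"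
    using td_glue[OF D1 D2 shr r1 r2 A_eq edges] by blast
  have "finite (Out m L R)" "card (Out m L R) \<le> 2*(t+1)" using Out_card[OF inv] by auto
  then have cY: "card Y \<le> Bd" using Y_card[of "Out m L R" m L R "Some \<sigma>"] ok okM
    unfolding Y_def rsM by simp
  have "\<forall>i\<in>I. card (B i) \<le> Bd" using bags bs1 bs2 cY by fastforce
  then show ?thesis unfolding Concl_def using D Bi0 unfolding A_def Y_def by blast
qed

end
end

context LWS begin

lemma main: "Inv m L R \<Longrightarrow> Concl m L R"
proof (induction "N - m" arbitrary: m L R rule: less_induct)
  case less
  note outer = less.hyps
  have inner: "\<And>L R. mu m L R = j \<Longrightarrow> Inv m L R \<Longrightarrow> Concl m L R" for j
  proof (induction j rule: less_induct)
    case (less j L R)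
    show ?case
    proof (cases "N \<le> m")
      case True then show ?thesis using base_case less.prems by blast
    next
      case False
      show ?thesis
      proof (cases "G m L R \<inter> {x. dp x = m} \<subseteq> starts L \<union> starts R")
        case True
        have "Inv (Suc m) (sh L) (sh R)" using inv_descend less.prems True by blast
        moreover have "N - Suc m < N - m" using False by simp
        ultimately have "Concl (Suc m) (sh L) (sh R)" using outer by blast
        then show ?thesis using concl_descend less.prems True by blast
      next
        case False
        then obtain d where d: "d \<in> G m L R" "dp d = m" "d \<notin> starts L \<union> starts R" by blast
        have "d \<in> V" using d GV by blast
        then obtain \<sigma> where s: "downward_path V r par d \<sigma>" "finite (range \<sigma> \<inter> S)" "card (range \<sigma> \<inter> S) \<le> h"
          using bb by blast
        have i1: "Inv m L (Some \<sigma>)" and i2: "Inv m (Some \<sigma>) R"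
          and m1: "mu m L (Some \<sigma>) < mu m L R" and m2: "mu m (Some \<sigma>) R < mu m L R"
          using inv1[OF less.prems(2) d s] inv2[OF less.prems(2) d s]
            mu1[OF less.prems(2) d s] mu2[OF less.prems(2) d s] by auto
        have c1: "Concl m L (Some \<sigma>)" using less.IH[OF _ refl i1] m1 less.prems(1) by blast
        have c2: "Concl m (Some \<sigma>) R" using less.IH[OF _ refl i2] m2 less.prems(1) by blast
        show ?thesis using concl_split[OF less.prems(2) d s c1 c2] .
      qed
    qed
  qed
  then show ?case using less.prems by blast
qed

lemma final: "\<exists>I p i0 B. tree_decomp S E I p i0 B \<and> (\<forall>i\<in>I. card (B i) \<le> Bd)"
proof -
  have G0: "G 0 None None = V" unfolding G_def lb_def ub_def by auto
  have "G 0 None None \<inter> {x. dp x = 0} \<subseteq> {r}" using G0 dp0 by auto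
  then have "par ` (G 0 None None \<inter> {x. dp x = 0}) \<subseteq> {par r}" by blast
  then have "card (par ` (G 0 None None \<inter> {x. dp x = 0})) \<le> card {par r}"
    by (intro card_mono) auto
  then have "card (par ` (G 0 None None \<inter> {x. dp x = 0})) \<le> 2" by simp
  then have "Inv 0 None None" unfolding Inv_def okray_def by simp
  then have "Concl 0 None None" by (rule main)
  moreover have "S \<inter> (G 0 None None \<union> Out 0 None None) = S" using G0 SV by blast
  ultimately show ?thesis unfolding Concl_def by metis
qed

end

theorem theorem1p12:
  fixes V :: "'v set" and r :: 'v and par :: "'v \<Rightarrow> 'v" and pos :: "'v \<Rightarrow> nat"
    and E :: "'v \<Rightarrow> 'v \<Rightarrow> bool" and F :: "'v set set"
  assumes "layered_wheel V r par pos E"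
    and "neat V r par"
    and "upward_restricted V r par E"
    and "\<forall>S\<in>F. finite S \<and> S \<subseteq> V"
    and "bounded_branch V r par F"
  shows "\<exists>c::nat. \<forall>S\<in>F. treewidth S E \<le> c"
  proof -
  have lw: "layered_wheel V r par pos E" using assms(1) .
  obtain t where t: "\<forall>v\<in>V. \<exists>X. finite X \<and> card X \<le> t \<and> (\<forall>x\<in>X. anc par x v)
        \<and> (\<forall>a b. E a b \<and> depth par r a \<noteq> depth par r b \<and> anc par v a \<and> \<not> anc par v b
               \<longrightarrow> b \<in> X)"
    using assms(3) unfolding upward_restricted_def by blast
  obtain h where h: "\<forall>S\<in>F. \<forall>v\<in>V. \<exists>f. downward_path V r par v f
        \<and> finite (range f \<inter> S) \<and> card (range f \<inter> S) \<le> h"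
    using assms(5) unfolding bounded_branch_def by blast
  have rt: "rooted_tree V r par" and pl: "planar_layer_order V r par pos"
    and Esym: "\<forall>u w. E u w \<longrightarrow> u \<in> V \<and> w \<in> V \<and> u \<noteq> w \<and> E w u"
    and Elayer: "\<forall>n. \<forall>u\<in>layer V r par n. \<forall>w\<in>layer V r par n.
        E u w \<longleftrightarrow>
          ((pos u < pos w \<and> \<not> (\<exists>x\<in>layer V r par n. pos u < pos x \<and> pos x < pos w))
         \<or> (pos w < pos u \<and> \<not> (\<exists>x\<in>layer V r par n. pos w < pos x \<and> pos x < pos u)))"
    and Eanc: "\<forall>u w. E u w \<and> depth par r u \<noteq> depth par r w \<longrightarrow> anc par u w \<or> anc par w u"
    and finlayer: "\<forall>n. finite (layer V r par n)"
    using lw unfolding layered_wheel_def by blast+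
  show ?thesis
  proof (intro exI[of _ "2*(t+1)+3*h"] ballI)
    fix S assume S: "S \<in> F"
    have Sfin: "finite S" and SV: "S \<subseteq> V" using assms(4) S by auto
    have bbS: "\<forall>v\<in>V. \<exists>f. downward_path V r par v f \<and> finite (range f \<inter> S) \<and> card (range f \<inter> S) \<le> h"
      using h S by blast
    define N where "N = Suc (Max (insert 0 (depth par r ` S)))"
    have Ndep: "\<forall>s\<in>S. depth par r s < N"
    proof
      fix s assume "s \<in> S"
      then have "depth par r s \<le> Max (insert 0 (depth par r ` S))" using Sfin by (intro Max_ge) auto
      then show "depth par r s < N" unfolding N_def by simp
    qed
    interpret L: LWS V r par pos E S h t N
      using rt pl Esym Elayer Eanc finlayer assms(2) t Sfin SV bbS Ndep by unfold_locales
    obtain I p i0 B where D: "tree_decomp S E I p i0 B" and bs: "\<forall>i\<in>I. card (B i) \<le> L.Bd"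
      using L.final by blast
    have "\<exists>I p i0 B. tree_decomp S E I p i0 B \<and> (\<forall>i\<in>I. card (B i) \<le> L.Bd + 1)"
      using D bs by fastforce
    then have "treewidth S E \<le> L.Bd" unfolding treewidth_def by (rule Least_le)
    then show "treewidth S E \<le> 2*(t+1)+3*h" unfolding L.Bd_def .
  qed
qed

end
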